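(* Let $\mathcal{A}=\{A_1,\dots,A_m\}$ be a bimodal collection of pairwise disjoint nonempty subsets of a finite abelian group $G$. For each $j$ let $H_j$ be the internal difference group of $A_j$ and let $a_j+H_j$ be the coset of $H_j$ containing $A_j$. Then $A_k\cap(a_j+H_j)=\emptyset$ for all $k\neq j$.
   Context: $G$ is written additively. The internal difference group of a subset $S\subseteq G$ is the subgroup generated by all $x-y$ with $x,y\in S$; a nonempty $S$ lies in a single coset of it. A collection $\{A_1,\dots,A_m\}$ of pairwise disjoint subsets of $G$ is bimodal if for every $i$ and every $\delta\in G\setminus\{0\}$, the number $N_i(\delta)$ of pairs $(a,b)$ with $a\in A_i$, $b\in A_j$ for some $j\neq i$, and $a-b=\delta$, satisfies $N_i(\delta)\in\{0,|A_i|\}$. *)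

theory Defs
  imports Main
begin

definition add_subgroup :: "'a::ab_group_add set \<Rightarrow> bool" where
  "add_subgroup H \<longleftrightarrow> 0 \<in> H \<and> (\<forall>x\<in>H. \<forall>y\<in>H. x + y \<in> H) \<and> (\<forall>x\<in>H. - x \<in> H)"

definition gen_subgroup :: "'a::ab_group_add set \<Rightarrow> 'a set" where
  "gen_subgroup X = \<Inter> {H. add_subgroup H \<and> X \<subseteq> H}"

definition int_diff_group :: "'a::ab_group_add set \<Rightarrow> 'a set" where
  "int_diff_group S = gen_subgroup {x - y | x y. x \<in> S \<and> y \<in> S}"

definition Ncount :: "'i set \<Rightarrow> ('i \<Rightarrow> 'a::ab_group_add set) \<Rightarrow> 'i \<Rightarrow> 'a \<Rightarrow> nat" where
  "Ncount I A i \<delta> = card {(a, b). a \<in> A i \<and> (\<exists>j\<in>I. j \<noteq> i \<and> b \<in> A j) \<and> a - b = \<delta>}"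

definition bimodal :: "'i set \<Rightarrow> ('i \<Rightarrow> 'a::ab_group_add set) \<Rightarrow> bool" where
  "bimodal I A \<longleftrightarrow>
     (\<forall>i\<in>I. \<forall>j\<in>I. i \<noteq> j \<longrightarrow> A i \<inter> A j = {}) \<and>
     (\<forall>i\<in>I. \<forall>\<delta>. \<delta> \<noteq> 0 \<longrightarrow> Ncount I A i \<delta> \<in> {0, card (A i)})"

end

theory Submission
  imports Defs
begin

lemma bim_step:
  fixes A :: "nat \<Rightarrow> 'a::{ab_group_add, finite} set" and m :: nat
  assumes bim: "bimodal {..<m} A" and j: "j < m"
    and a': "a' \<in> A j" and b': "b' \<in> A k" and k: "k < m" "k \<noteq> j"
    and z: "z \<in> A j"
  shows "\<exists>i<m. i \<noteq> j \<and> z + (b' - a') \<in> A i"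
proof -
  define B where "B = {q. \<exists>i\<in>{..<m}. i \<noteq> j \<and> q \<in> A i}"
  define \<delta> where "\<delta> = a' - b'"
  have disj: "A j \<inter> A k = {}" using bim j k unfolding bimodal_def by auto
  have dnz: "\<delta> \<noteq> 0" using disj a' b' unfolding \<delta>_def by auto
  define Q where "Q = {(p, q). p \<in> A j \<and> (\<exists>i\<in>{..<m}. i \<noteq> j \<and> q \<in> A i) \<and> p - q = \<delta>}"
  have NQ: "Ncount {..<m} A j \<delta> = card Q" unfolding Ncount_def Q_def by simp
  have "Ncount {..<m} A j \<delta> \<in> {0, card (A j)}" using bim j dnz unfolding bimodal_def by auto
  moreover have "card Q \<noteq> 0"
  proof -
    have "(a', b') \<in> Q" unfolding Q_def \<delta>_def using a' b' k by auto
    moreover have "finite Q" by simp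
    ultimately show ?thesis by auto
  qed
  ultimately have cQ: "card Q = card (A j)" using NQ by auto
  define S where "S = {p \<in> A j. p - \<delta> \<in> B}"
  have "inj_on fst Q" unfolding Q_def inj_on_def by auto
  moreover have "fst ` Q = S"
  proof
    show "fst ` Q \<subseteq> S" unfolding Q_def S_def B_def by (auto simp: algebra_simps)
    show "S \<subseteq> fst ` Q"
    proof
      fix p assume "p \<in> S"
      then have "(p, p - \<delta>) \<in> Q" unfolding Q_def S_def B_def by auto
      then show "p \<in> fst ` Q" by force
    qed
  qed
  ultimately have "card S = card (A j)" using cQ card_image by fastforce
  moreover have "S \<subseteq> A j" unfolding S_def by auto
  ultimately have "S = A j" by (simp add: card_subset_eq)
  then have "z - \<delta> \<in> B" using z unfolding S_def by auto
  moreover have "z - \<delta> = z + (b' - a')" unfolding \<delta>_def by (simp add: algebra_simps)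
  ultimately show ?thesis unfolding B_def by auto
qed

theorem lemma3p2:
  fixes A :: "nat \<Rightarrow> 'a::{ab_group_add, finite} set" and m :: nat
  assumes "\<forall>i<m. \<forall>j<m. i \<noteq> j \<longrightarrow> A i \<inter> A j = {}"
    and "\<forall>i<m. A i \<noteq> {}"
    and "bimodal {..<m} A"
  shows "\<forall>j<m. \<forall>k<m. k \<noteq> j \<longrightarrow>
           (\<forall>a\<in>A j. A k \<inter> (\<lambda>h. a + h) ` int_diff_group (A j) = {})"
proof (intro allI impI ballI)
  fix j k a assume j: "j < m" and k: "k < m" and kj: "k \<noteq> j" and a: "a \<in> A j"
  define B where "B = {q. \<exists>i<m. i \<noteq> j \<and> q \<in> A i}"
  define T where "T = {t. \<forall>x\<in>A j. x + t \<in> B}"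
  have BT: "b' - a' \<in> T" if "b' \<in> B" "a' \<in> A j" for a' b'
    using bim_step[OF assms(3) j that(2)] that(1) unfolding T_def B_def by blast
  have step: "t - (x - y) \<in> T" if "t \<in> T" "x \<in> A j" "y \<in> A j" for t x y
  proof -
    have "y + t \<in> B" using that unfolding T_def by auto
    then have "(y + t) - x \<in> T" using BT that by auto
    moreover have "(y + t) - x = t - (x - y)" by (simp add: algebra_simps)
    ultimately show ?thesis by simp
  qed
  define K where "K = {h. \<forall>t. t \<in> T \<longleftrightarrow> t - h \<in> T}"
  have sg: "add_subgroup K"
  proof -
    have "0 \<in> K" unfolding K_def by simp
    moreover have "x + y \<in> K" if "x \<in> K" "y \<in> K" for x y
    proof -
      have "t \<in> T \<longleftrightarrow> t - (x + y) \<in> T" for t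
      proof -
        have "t \<in> T \<longleftrightarrow> t - x \<in> T" "t - x \<in> T \<longleftrightarrow> (t - x) - y \<in> T" using that unfolding K_def by blast+
        moreover have "(t - x) - y = t - (x + y)" by (simp add: algebra_simps)
        ultimately show ?thesis by simp
      qed
      then show ?thesis unfolding K_def by simp
    qed
    moreover have "- x \<in> K" if "x \<in> K" for x
    proof -
      have "t \<in> T \<longleftrightarrow> t - (- x) \<in> T" for t
      proof -
        have "t + x \<in> T \<longleftrightarrow> (t + x) - x \<in> T" using that unfolding K_def by blast
        then show ?thesis by simp
      qed
      then show ?thesis unfolding K_def by simp
    qed
    ultimately show ?thesis unfolding add_subgroup_def by blast
  qed
  have gens: "{x - y | x y. x \<in> A j \<and> y \<in> A j} \<subseteq> K"
  proof
    fix d assume "d \<in> {x - y | x y. x \<in> A j \<and> y \<in> A j}"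
    then obtain x y where d: "d = x - y" "x \<in> A j" "y \<in> A j" by auto
    have "t \<in> T \<longleftrightarrow> t - d \<in> T" for t
    proof
      assume "t \<in> T" then show "t - d \<in> T" unfolding d(1) using step d(2,3) by blast
    next
      assume "t - d \<in> T"
      then have "(t - d) - (y - x) \<in> T" using step[OF _ d(3) d(2)] by blast
      moreover have "(t - d) - (y - x) = t" unfolding d(1) by (simp add: algebra_simps)
      ultimately show "t \<in> T" by simp
    qed
    then show "d \<in> K" unfolding K_def by auto
  qed
  have HK: "int_diff_group (A j) \<subseteq> K"
    unfolding int_diff_group_def gen_subgroup_def using sg gens by (intro Inter_lower) simp
  show "A k \<inter> (\<lambda>h. a + h) ` int_diff_group (A j) = {}"
  proof (rule ccontr)
    assume "A k \<inter> (\<lambda>h. a + h) ` int_diff_group (A j) \<noteq> {}"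
    then obtain h where h: "h \<in> int_diff_group (A j)" "a + h \<in> A k" by auto
    have "a + h \<in> B" unfolding B_def using h k kj by auto
    then have "(a + h) - a \<in> T" using BT a by blast
    then have "h \<in> T" by simp
    moreover have "h \<in> K" using HK h by auto
    ultimately have "h - h \<in> T" unfolding K_def by blast
    then have "0 \<in> T" by simp
    then have "a \<in> B" using a unfolding T_def by auto
    then obtain i where "i < m" "i \<noteq> j" "a \<in> A i" unfolding B_def by auto
    then show False using assms(1) j a by blast
  qed
qed

end
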